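(* Let $G$ be a graph with an RDV representation on a rooted tree $T$, with node coordinates $x(\cdot),y(\cdot)$ defined as in the context, and let $v_1,\dots,v_n$ be a bottom-up enumeration of the vertices of $G$. Then for all $1\le i<j\le n$, $v_iv_j$ is an edge of $G$ if and only if the vertical segment $q(v_j)$ intersects the horizontal segment $s(v_i)$.
   Context: An RDV representation of a graph $G$ consists of a rooted tree $T$ (the host tree; its vertices are called nodes) and, for every vertex $v$ of $G$, a downward path $P(v)$ in $T$ (a path that starts at some node and then always proceeds from a node to one of its children), such that for distinct vertices $v,w$, $vw$ is an edge of $G$ if and only if $P(v)$ and $P(w)$ share at least one node. For a vertex $v$, $t(v)$ denotes the node of $P(v)$ closest to the root, and $b(v)$ the node of $P(v)$ farthest from the root. A bottom-up enumeration is an ordering of the vertices of $G$ by non-increasing distance of $t(v)$ from the root (ties broken arbitrarily). Coordinates: fix an arbitrary order of the children at each node of $T$, and number the leaves $L_1,\dots,L_\ell$ from left to right according to this order (i.e., in the order they are encountered by a depth-first traversal respecting the child orders). For a node $u$, let $\ell(u)$ and $r(u)$ be the leftmost (lowest-indexed) and rightmost (highest-indexed) leaf descendant of $u$ (a leaf is its own descendant); let $x(u)$ be the index of $\ell(u)$ and, for a leaf $L_k$, $x(L_k)=k$; let $y(u)$ be the distance (number of edges) from $u$ to the root. Node $u$ is associated with the point $(x(u),y(u))\in\mathbb{R}^2$. For a vertex $v$, the horizontal segment $s(v)$ is the segment from $(x(t(v)),y(t(v)))$ to $(x(r(t(v))),y(t(v)))$, and the vertical segment $q(v)$ is the segment from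 $(x(b(v)),y(b(v)))$ to $(x(b(v)),y(t(v)))$. *)

theory Defs
  imports "HOL-Analysis.Analysis" "HOL-Library.Sublist"
begin

text \<open>A node is addressed by its position: the list of child indices on the way
  from the root. The root is [], the children of u are u @ [i].\<close>

datatype tree = Node "tree list"

inductive is_node :: "tree \<Rightarrow> nat list \<Rightarrow> bool" where
  root: "is_node (Node ts) []"
| child: "i < length ts \<Longrightarrow> is_node (ts ! i) p \<Longrightarrow> is_node (Node ts) (i # p)"

text \<open>Leaves: nodes without children (children of u are u@[0], u@[1], ...).\<close>
definition is_leaf :: "tree \<Rightarrow> nat list \<Rightarrow> bool" where
  "is_leaf T p \<longleftrightarrow> is_node T p \<and> \<not> is_node T (p @ [0])"

text \<open>Left-to-right (depth-first, respecting child orders) order on nodes: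
  lexicographic order on positions; leaves are numbered 1..l in this order.\<close>
definition leaf_index :: "tree \<Rightarrow> nat list \<Rightarrow> nat" where
  "leaf_index T L = card {L'. is_leaf T L' \<and> (L', L) \<in> lexord {(a, b). a < b}} + 1"

definition xcoord :: "tree \<Rightarrow> nat list \<Rightarrow> nat" where
  "xcoord T u = Min {leaf_index T L | L. is_leaf T L \<and> prefix u L}"

definition xright :: "tree \<Rightarrow> nat list \<Rightarrow> nat" where
  "xright T u = Max {leaf_index T L | L. is_leaf T L \<and> prefix u L}"

definition ycoord :: "nat list \<Rightarrow> nat" where
  "ycoord u = length u"

definition dpath :: "nat list \<Rightarrow> nat list \<Rightarrow> nat list set" where
  "dpath a b = {p. prefix a p \<and> prefix p b}"

definition RDV_rep :: "'v set \<Rightarrow> ('v \<Rightarrow> 'v \<Rightarrow> bool) \<Rightarrow> tree \<Rightarrow> ('v \<Rightarrow> nat list) \<Rightarrow> ('v \<Rightarrow> nat list) \<Rightarrow> bool" where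
  "RDV_rep V E T tp bt \<longleftrightarrow>
     (\<forall>v\<in>V. is_node T (bt v) \<and> prefix (tp v) (bt v)) \<and>
     (\<forall>v\<in>V. \<forall>w\<in>V. v \<noteq> w \<longrightarrow> (E v w \<longleftrightarrow> dpath (tp v) (bt v) \<inter> dpath (tp w) (bt w) \<noteq> {}))"

definition hseg :: "tree \<Rightarrow> nat list \<Rightarrow> (real \<times> real) set" where
  "hseg T t = closed_segment (real (xcoord T t), real (ycoord t)) (real (xright T t), real (ycoord t))"

definition vseg :: "tree \<Rightarrow> nat list \<Rightarrow> nat list \<Rightarrow> (real \<times> real) set" where
  "vseg T t b = closed_segment (real (xcoord T b), real (ycoord b)) (real (xcoord T b), real (ycoord t))"

definition bottom_up :: "'v set \<Rightarrow> ('v \<Rightarrow> nat list) \<Rightarrow> 'v list \<Rightarrow> bool" where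
  "bottom_up V tp vs \<longleftrightarrow> distinct vs \<and> set vs = V \<and>
     (\<forall>i j. i < j \<and> j < length vs \<longrightarrow> ycoord (tp (vs ! j)) \<le> ycoord (tp (vs ! i)))"

end

theory Submission
  imports Defs
begin

abbreviation "LR \<equiv> lexord {(a::nat, b). a < b}"

lemma nodes_finite: "finite {p. is_node T p}"
proof (induction T)
  case (Node ts)
  have "{p. is_node (Node ts) p} \<subseteq> {[]} \<union> (\<Union>i<length ts. (Cons i) ` {p. is_node (ts!i) p})"
  proof
    fix p assume "p \<in> {p. is_node (Node ts) p}"
    hence "is_node (Node ts) p" by simp
    thus "p \<in> {[]} \<union> (\<Union>i<length ts. (Cons i) ` {p. is_node (ts!i) p})"
      by cases auto
  qed
  moreover have "finite ({[]} \<union> (\<Union>i<length ts. (Cons i) ` {p. is_node (ts!i) p}))"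
    using Node by auto
  ultimately show ?case by (rule finite_subset)
qed

lemma is_node_prefix: "is_node T q \<Longrightarrow> prefix p q \<Longrightarrow> is_node T p"
proof (induction T q arbitrary: p rule: is_node.induct)
  case (root ts) thus ?case by (simp add: is_node.root)
next
  case (child i ts q)
  show ?case
  proof (cases p)
    case Nil thus ?thesis by (simp add: is_node.root)
  next
    case (Cons a p')
    with child show ?thesis by (auto intro: is_node.child)
  qed
qed

lemma leaf_below:
  assumes "is_node T p" shows "\<exists>L. is_leaf T L \<and> prefix p L"
proof -
  let ?P = "\<lambda>q. is_node T q \<and> prefix p q"
  have b: "\<forall>y. ?P y \<longrightarrow> length y < Suc (Max (length ` {p. is_node T p}))"
    using nodes_finite[of T] by (auto intro!: le_imp_less_Suc Max_ge)
  obtain q where q: "?P q" "\<forall>y. ?P y \<longrightarrow> length y \<le> length q"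
    using ex_has_greatest_nat[of ?P p length, OF _ b] assms by auto
  have "\<not> is_node T (q @ [0])"
  proof
    assume "is_node T (q @ [0])"
    hence "?P (q@[0])" using q by (auto intro: prefix_order.trans)
    with q(2) show False by force
  qed
  with q show ?thesis unfolding is_leaf_def by auto
qed

lemma leaf_index_mono:
  assumes "is_leaf T L1" "is_leaf T L2" "(L1, L2) \<in> LR"
  shows "leaf_index T L1 < leaf_index T L2"
proof -
  have tr: "trans {(a::nat, b). a < b}" by (auto simp: trans_def)
  let ?A = "\<lambda>L. {L'. is_leaf T L' \<and> (L', L) \<in> LR}"
  have "?A L1 \<subset> ?A L2"
  proof
    show "?A L1 \<subseteq> ?A L2" using assms tr by (auto intro: lexord_trans)
    have "L1 \<notin> ?A L1" by (auto simp: lexord_irreflexive)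
    moreover have "L1 \<in> ?A L2" using assms by auto
    ultimately show "?A L1 \<noteq> ?A L2" by blast
  qed
  moreover have "finite (?A L2)"
    by (rule finite_subset[OF _ nodes_finite[of T]]) (auto simp: is_leaf_def)
  ultimately show ?thesis unfolding leaf_index_def by (simp add: psubset_card_mono)
qed

lemma leaf_index_le:
  assumes "is_leaf T L1" "is_leaf T L2" "leaf_index T L1 \<le> leaf_index T L2"
  shows "L1 = L2 \<or> (L1, L2) \<in> LR"
proof -
  have "(L1, L2) \<in> LR \<or> L1 = L2 \<or> (L2, L1) \<in> LR"
    by (rule lexord_linear) auto
  thus ?thesis using leaf_index_mono[OF assms(2,1)] assms(3) by auto
qed

lemma lex_interval:
  assumes "prefix u a" "prefix u b" "a = m \<or> (a, m) \<in> LR" "m = b \<or> (m, b) \<in> LR"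
  shows "prefix u m"
  using assms
proof (induction u arbitrary: a b m)
  case Nil thus ?case by simp
next
  case (Cons x u)
  then obtain a' b' where ab: "a = x # a'" "b = x # b'"
    by (auto simp: prefix_def)
  show ?case
  proof (cases m)
    case Nil thus ?thesis using Cons.prems ab by auto
  next
    case (Cons y m')
    with Cons.prems ab have "y = x" by auto
    with Cons.prems ab \<open>m = y # m'\<close> have "a' = m' \<or> (a', m') \<in> LR" "m' = b' \<or> (m', b') \<in> LR"
      by auto
    with Cons.IH[of a' b' m'] Cons.prems ab \<open>m = y # m'\<close> \<open>y = x\<close> show ?thesis by auto
  qed
qed

lemma S_image: "{leaf_index T L | L. is_leaf T L \<and> prefix u L} = leaf_index T ` {L. is_leaf T L \<and> prefix u L}"
  by auto

lemma S_finite: "finite {leaf_index T L | L. is_leaf T L \<and> prefix u L}"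
  unfolding S_image
  by (rule finite_imageI, rule finite_subset[OF _ nodes_finite[of T]]) (auto simp: is_leaf_def)

lemma S_ne: "is_node T u \<Longrightarrow> {leaf_index T L | L. is_leaf T L \<and> prefix u L} \<noteq> {}"
  using leaf_below by blast

lemma xcoord_ex: assumes "is_node T u"
  shows "\<exists>L. is_leaf T L \<and> prefix u L \<and> xcoord T u = leaf_index T L"
proof -
  have "xcoord T u \<in> {leaf_index T L | L. is_leaf T L \<and> prefix u L}"
    unfolding xcoord_def using S_finite S_ne[OF assms] by (rule Min_in)
  thus ?thesis by auto
qed

lemma xright_ex: assumes "is_node T u"
  shows "\<exists>L. is_leaf T L \<and> prefix u L \<and> xright T u = leaf_index T L"
proof -
  have "xright T u \<in> {leaf_index T L | L. is_leaf T L \<and> prefix u L}"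
    unfolding xright_def using S_finite S_ne[OF assms] by (rule Max_in)
  thus ?thesis by auto
qed

lemma x_le_xright: "is_node T u \<Longrightarrow> xcoord T u \<le> xright T u"
  unfolding xcoord_def xright_def using Min_le[OF S_finite Max_in[OF S_finite S_ne]] by blast

lemma key:
  assumes "is_node T u" "is_node T w" "length u \<le> length w"
  shows "prefix u w \<longleftrightarrow> xcoord T u \<le> xcoord T w \<and> xcoord T w \<le> xright T u"
proof
  assume p: "prefix u w"
  let ?Su = "{leaf_index T L | L. is_leaf T L \<and> prefix u L}"
  let ?Sw = "{leaf_index T L | L. is_leaf T L \<and> prefix w L}"
  have sub: "?Sw \<subseteq> ?Su" using p by (auto intro: prefix_order.trans)
  have "Min ?Su \<le> Min ?Sw" using sub S_ne[OF assms(2)] S_finite by (rule Min_antimono)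
  moreover have "Min ?Sw \<le> Max ?Sw" using Min_le[OF S_finite Max_in[OF S_finite S_ne[OF assms(2)]]] by blast
  moreover have "Max ?Sw \<le> Max ?Su" using sub S_ne[OF assms(2)] S_finite by (rule Max_mono)
  ultimately show "xcoord T u \<le> xcoord T w \<and> xcoord T w \<le> xright T u"
    unfolding xcoord_def xright_def by simp
next
  assume h: "xcoord T u \<le> xcoord T w \<and> xcoord T w \<le> xright T u"
  obtain a where a: "is_leaf T a" "prefix u a" "xcoord T u = leaf_index T a" using xcoord_ex[OF assms(1)] by blast
  obtain b where b: "is_leaf T b" "prefix u b" "xright T u = leaf_index T b" using xright_ex[OF assms(1)] by blast
  obtain m where m: "is_leaf T m" "prefix w m" "xcoord T w = leaf_index T m" using xcoord_ex[OF assms(2)] by blast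
  have "a = m \<or> (a, m) \<in> LR" using leaf_index_le[OF a(1) m(1)] a m h by simp
  moreover have "m = b \<or> (m, b) \<in> LR" using leaf_index_le[OF m(1) b(1)] b m h by simp
  ultimately have "prefix u m" using lex_interval a(2) b(2) by blast
  thus "prefix u w" using m(2) assms(3) prefix_length_prefix by blast
qed

lemma seg_h: "closed_segment (x1::real, y) (x2, y) = closed_segment x1 x2 \<times> {y}"
  by (auto simp: closed_segment_def; (rule_tac x=u in exI)?; auto simp: algebra_simps)

lemma seg_v: "closed_segment (x::real, y1) (x, y2) = {x} \<times> closed_segment y1 y2"
  by (auto simp: closed_segment_def; (rule_tac x=u in exI)?; auto simp: algebra_simps)

lemma cross_int: "{a} \<times> I \<inter> J \<times> {b} \<noteq> {} \<longleftrightarrow> a \<in> J \<and> b \<in> I"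
  by auto

theorem theorem2:
  fixes V :: "'v set" and E :: "'v \<Rightarrow> 'v \<Rightarrow> bool" and T :: tree
    and tp bt :: "'v \<Rightarrow> nat list" and vs :: "'v list"
  assumes "finite V"
    and "\<forall>v w. E v w \<longleftrightarrow> E w v"
    and "\<forall>v. \<not> E v v"
    and "RDV_rep V E T tp bt"
    and "bottom_up V tp vs"
  shows "\<forall>i j. i < j \<and> j < length vs \<longrightarrow>
           (E (vs ! i) (vs ! j) \<longleftrightarrow> vseg T (tp (vs ! j)) (bt (vs ! j)) \<inter> hseg T (tp (vs ! i)) \<noteq> {})"
proof (intro allI impI)
  fix i j assume ij: "i < j \<and> j < length vs"
  define v where "v = vs ! i"
  define w where "w = vs ! j"
  have dist: "distinct vs" and setv: "set vs = V"
    and ord: "\<forall>i j. i < j \<and> j < length vs \<longrightarrow> ycoord (tp (vs ! j)) \<le> ycoord (tp (vs ! i))"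
    using assms(5) unfolding bottom_up_def by auto
  have vV: "v \<in> V" and wV: "w \<in> V" using ij setv unfolding v_def w_def by auto
  have vw: "v \<noteq> w" using ij dist unfolding v_def w_def by (simp add: nth_eq_iff_index_eq)
  have len: "length (tp w) \<le> length (tp v)" using ord ij unfolding v_def w_def ycoord_def by auto
  have rv: "is_node T (bt v)" "prefix (tp v) (bt v)" and rw: "is_node T (bt w)" "prefix (tp w) (bt w)"
    using assms(4) vV wV unfolding RDV_rep_def by auto
  have Eiff: "E v w \<longleftrightarrow> dpath (tp v) (bt v) \<inter> dpath (tp w) (bt w) \<noteq> {}"
    using assms(4) vV wV vw unfolding RDV_rep_def by auto
  have tpv: "is_node T (tp v)" using is_node_prefix rv by blast
  have c1: "dpath (tp v) (bt v) \<inter> dpath (tp w) (bt w) \<noteq> {} \<longleftrightarrow> prefix (tp v) (bt w)"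
  proof
    assume "dpath (tp v) (bt v) \<inter> dpath (tp w) (bt w) \<noteq> {}"
    then obtain p where "prefix (tp v) p" "prefix p (bt w)" unfolding dpath_def by auto
    thus "prefix (tp v) (bt w)" by (rule prefix_order.trans)
  next
    assume h: "prefix (tp v) (bt w)"
    have "prefix (tp w) (tp v)" using prefix_length_prefix[OF rw(2) h len] .
    hence "tp v \<in> dpath (tp v) (bt v) \<inter> dpath (tp w) (bt w)" using h rv unfolding dpath_def by auto
    thus "dpath (tp v) (bt v) \<inter> dpath (tp w) (bt w) \<noteq> {}" by blast
  qed
  have lw: "length (tp w) \<le> length (bt w)" using rw(2) by (rule prefix_length_le)
  have xle: "xcoord T (tp v) \<le> xright T (tp v)" using x_le_xright[OF tpv] .
  have c2: "vseg T (tp w) (bt w) \<inter> hseg T (tp v) \<noteq> {} \<longleftrightarrow>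
      length (tp v) \<le> length (bt w) \<and> xcoord T (tp v) \<le> xcoord T (bt w) \<and> xcoord T (bt w) \<le> xright T (tp v)"
    unfolding vseg_def hseg_def seg_h seg_v cross_int closed_segment_eq_real_ivl ycoord_def
    using len lw xle by auto
  have c3: "prefix (tp v) (bt w) \<longleftrightarrow>
      length (tp v) \<le> length (bt w) \<and> xcoord T (tp v) \<le> xcoord T (bt w) \<and> xcoord T (bt w) \<le> xright T (tp v)"
    using key[OF tpv rw(1)] prefix_length_le by blast
  show "E (vs ! i) (vs ! j) \<longleftrightarrow> vseg T (tp (vs ! j)) (bt (vs ! j)) \<inter> hseg T (tp (vs ! i)) \<noteq> {}"
    using Eiff c1 c2 c3 unfolding v_def w_def by simp
qed

end
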